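(* Let $\mathcal{T}=(\mathcal{E},\mathcal{A})$ be a finite directed tree with root environment $0\in\mathcal{E}$, where $\mathcal{A}\subset\mathcal{E}^2$ is the set of arcs. Let $k\ge 1$. Suppose we are given a root weight vector $w_0\in\mathbb{R}^k$ and, for each arc $a=(e_m,e_n)\in\mathcal{A}$, a vector $\delta_a\in\mathbb{R}^k$, and define for every $e\in\mathcal{E}$ $$w_e := w_0+\sum_{a\in \mathrm{path}(0,e)}\delta_a,$$ where $\mathrm{path}(0,e)$ is the set of arcs on the directed path from $0$ to $e$ (so that $\delta_a=w_{e_n}-w_{e_m}$ for each arc $a=(e_m,e_n)$). Let $\Psi:\mathcal{X}\to\mathbb{R}^k$, where $\mathcal{X}\subseteq\mathbb{R}^d$. Assume: (i) for each environment $e\in\mathcal{E}$, pairs $(\mathbf{X},Y)$ are drawn i.i.d. from a distribution satisfying $\mathbb{E}[Y\mid \mathbf{X},e]=w_e^\top\Psi(\mathbf{X})$, and the support of $p(x\mid e)$ is the same set $\mathcal{X}$ for all $e$; (ii) there exist environments $e_1,\dots,e_k\in\mathcal{E}$ such that the matrix $[w_{e_1},\dots,w_{e_k}]$ is invertible; (iii) there exist $x^1,\dots,x^k\in\mathcal{X}$ such that the matrix $[\Psi(x^1),\dots,\Psi(x^k)]$ is invertible. Now let $\hat w_0\in\mathbb{R}^k$, $\hat\delta_a\in\mathbb{R}^k$ for $a\in\mathcal{A}$, and $\hat\Psi:\mathcal{X}\to\mathbb{R}^k$ be arbitrary, and define $\hat w_e:=\hat w_0+\sum_{a\in\mathrm{path}(0,e)}\hat\delta_a$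 for all $e\in\mathcal{E}$. If $\mathbb{E}[Y\mid \mathbf{X}=x,e]=\hat w_e^\top\hat\Psi(x)$ for all $x\in\mathcal{X}$ and all $e\in\mathcal{E}$, then there exists an invertible matrix $\mathbf{L}\in\mathbb{R}^{k\times k}$ such that: 1. $\Psi(x)=\mathbf{L}\hat\Psi(x)$ for all $x\in\mathcal{X}$; 2. $w_e^\top\mathbf{L}=\hat w_e^\top$ for all $e\in\mathcal{E}$; 3. $\delta_a^\top\mathbf{L}=\hat\delta_a^\top$ for all $a\in\mathcal{A}$.
   Context: Environments are the nodes of the tree; the model is $\mathbf{Z}=\Psi(\mathbf{X})+\eta$, $Y^e=w_e^\top\mathbf{Z}^e+\epsilon$, with latent dimension $k$. The learned quantities $\hat w_0,\hat\delta_a,\hat\Psi$ have the same dimension $k$ as the true ones. *)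

theory Defs
  imports "HOL-Analysis.Analysis"
begin

definition dwalk :: "('e \<times> 'e) set \<Rightarrow> 'e list \<Rightarrow> bool" where
  "dwalk A xs \<longleftrightarrow> xs \<noteq> [] \<and> (\<forall>i. Suc i < length xs \<longrightarrow> (xs ! i, xs ! Suc i) \<in> A)"

definition directed_tree :: "'e set \<Rightarrow> ('e \<times> 'e) set \<Rightarrow> 'e \<Rightarrow> bool" where
  "directed_tree E A r \<longleftrightarrow> finite E \<and> A \<subseteq> E \<times> E \<and> r \<in> E \<and>
     (\<forall>e\<in>E. \<exists>!xs. dwalk A xs \<and> hd xs = r \<and> last xs = e)"

definition path_arcs :: "('e \<times> 'e) set \<Rightarrow> 'e \<Rightarrow> 'e \<Rightarrow> ('e \<times> 'e) set" where
  "path_arcs A r e =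
     (let xs = (THE xs. dwalk A xs \<and> hd xs = r \<and> last xs = e) in set (zip xs (tl xs)))"

definition tree_weight ::
  "('e \<times> 'e) set \<Rightarrow> 'e \<Rightarrow> real^'k \<Rightarrow> ('e \<times> 'e \<Rightarrow> real^'k) \<Rightarrow> 'e \<Rightarrow> real^'k" where
  "tree_weight A r w0 \<delta> e = w0 + (\<Sum>a\<in>path_arcs A r e. \<delta> a)"

end

theory Submission
  imports Defs
begin

lemma zip_tl_snoc:
  "ys \<noteq> [] \<Longrightarrow> set (zip (ys @ [v]) (tl (ys @ [v]))) = insert (last ys, v) (set (zip ys (tl ys)))"
  by (induction ys rule: induct_list012) auto

lemma path_arcs_step:
  assumes tree: "directed_tree E A r" and a: "(u, v) \<in> A"
  shows "path_arcs A r v = insert (u, v) (path_arcs A r u) \<and> (u, v) \<notin> path_arcs A r u"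
proof -
  have uE: "u \<in> E" and vE: "v \<in> E" using tree a unfolding directed_tree_def by auto
  have ex1u: "\<exists>!xs. dwalk A xs \<and> hd xs = r \<and> last xs = u" using tree uE unfolding directed_tree_def by auto
  have ex1v: "\<exists>!xs. dwalk A xs \<and> hd xs = r \<and> last xs = v" using tree vE unfolding directed_tree_def by auto
  define xs where "xs = (THE xs. dwalk A xs \<and> hd xs = r \<and> last xs = u)"
  have xs: "dwalk A xs \<and> hd xs = r \<and> last xs = u" unfolding xs_def by (rule theI'[OF ex1u])
  hence ne: "xs \<noteq> []" unfolding dwalk_def by auto
  have w2: "dwalk A (xs @ [v]) \<and> hd (xs @ [v]) = r \<and> last (xs @ [v]) = v"
  proof -
    have "dwalk A (xs @ [v])" unfolding dwalk_def
    proof (intro conjI allI impI)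
      fix i assume i: "Suc i < length (xs @ [v])"
      show "((xs @ [v]) ! i, (xs @ [v]) ! Suc i) \<in> A"
      proof (cases "Suc i < length xs")
        case True then show ?thesis using xs by (simp add: nth_append dwalk_def)
      next
        case False
        then have "Suc i = length xs" using i by simp
        then have "xs ! i = u" using xs ne by (metis diff_Suc_1 last_conv_nth)
        then show ?thesis using a \<open>Suc i = length xs\<close> by (simp add: nth_append)
      qed
    qed simp
    then show ?thesis using xs ne by simp
  qed
  have thev: "(THE xs. dwalk A xs \<and> hd xs = r \<and> last xs = v) = xs @ [v]"
    by (rule the1_equality[OF ex1v w2])
  have pu: "path_arcs A r u = set (zip xs (tl xs))" unfolding path_arcs_def xs_def Let_def by simp
  have pv: "path_arcs A r v = set (zip (xs @ [v]) (tl (xs @ [v])))" unfolding path_arcs_def thev Let_def by simp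
  have notin: "(u, v) \<notin> set (zip xs (tl xs))"
  proof
    assume "(u, v) \<in> set (zip xs (tl xs))"
    then have "\<exists>i. i < length xs \<and> i < length (tl xs) \<and> xs ! i = u \<and> tl xs ! i = v"
      unfolding in_set_zip by auto
    then obtain i where i: "i < length xs" "i < length (tl xs)" "xs ! i = u" "tl xs ! i = v"
      by blast
    have si: "Suc i < length xs" "xs ! Suc i = v" using i ne by (auto simp: nth_tl)
    define ys where "ys = take (Suc (Suc i)) xs"
    have "dwalk A ys" using xs si unfolding dwalk_def ys_def by auto
    moreover have "hd ys = r" using xs ne unfolding ys_def by (simp add: hd_take)
    moreover have "last ys = v" using si unfolding ys_def
      by (simp add: take_Suc_conv_app_nth[of "Suc i"])
    ultimately have "ys = xs @ [v]" using ex1v w2 by blast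
    moreover have "length ys < length (xs @ [v])" unfolding ys_def by simp
    ultimately show False by simp
  qed
  show ?thesis using pu pv notin zip_tl_snoc[OF ne, of v] xs by simp
qed

lemma tree_weight_step:
  assumes tree: "directed_tree E A r" and a: "(u, v) \<in> A"
  shows "dl (u, v) = tree_weight A r wz dl v - tree_weight A r wz dl u"
proof -
  have fin: "finite (path_arcs A r u)" unfolding path_arcs_def Let_def by simp
  show ?thesis using path_arcs_step[OF tree a] fin unfolding tree_weight_def
    by (simp add: sum.insert)
qed

lemma lin_ident:
  fixes w wh :: "'e \<Rightarrow> real^'k" and \<Psi> \<Psi>h :: "'x \<Rightarrow> real^'k"
    and es :: "'k \<Rightarrow> 'e" and xs :: "'k \<Rightarrow> 'x"
  assumes eq: "\<forall>e\<in>E. \<forall>x\<in>X. w e \<bullet> \<Psi> x = wh e \<bullet> \<Psi>h x"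
    and es: "\<forall>i. es i \<in> E" and invW: "invertible (\<chi> j i. w (es i) $ j)"
    and xs: "\<forall>i. xs i \<in> X" and invP: "invertible (\<chi> j i. \<Psi> (xs i) $ j)"
  shows "\<exists>L :: real^'k^'k. invertible L \<and> (\<forall>x\<in>X. \<Psi> x = L *v \<Psi>h x) \<and>
           (\<forall>e\<in>E. w e v* L = wh e)"
proof -
  define Wt :: "real^'k^'k" where "Wt = (\<chi> i j. w (es i) $ j)"
  define Wht :: "real^'k^'k" where "Wht = (\<chi> i j. wh (es i) $ j)"
  define P :: "real^'k^'k" where "P = (\<chi> j i. \<Psi> (xs i) $ j)"
  define Ph :: "real^'k^'k" where "Ph = (\<chi> j i. \<Psi>h (xs i) $ j)"
  have "transpose (\<chi> j i. w (es i) $ j) = Wt" unfolding Wt_def transpose_def by (simp add: vec_eq_iff)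
  hence invWt: "invertible Wt" using transpose_invertible[OF invW] by simp
  have invP': "invertible P" using invP unfolding P_def .
  have F1: "\<And>y. Wt *v y = (\<chi> i. w (es i) \<bullet> y)"
    unfolding Wt_def by (simp add: vec_eq_iff matrix_vector_mult_def inner_vec_def)
  have F1h: "\<And>y. Wht *v y = (\<chi> i. wh (es i) \<bullet> y)"
    unfolding Wht_def by (simp add: vec_eq_iff matrix_vector_mult_def inner_vec_def)
  have F2: "\<And>x. x \<in> X \<Longrightarrow> Wt *v \<Psi> x = Wht *v \<Psi>h x"
    using eq es by (simp add: F1 F1h vec_eq_iff)
  have F3: "Wt ** P = Wht ** Ph"
    using eq es xs unfolding Wt_def Wht_def P_def Ph_def
    by (simp add: vec_eq_iff matrix_matrix_mult_def inner_vec_def)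
  have invWP: "invertible (Wt ** P)" using invertible_mult[OF invWt invP'] .
  then obtain M where M1: "M ** (Wt ** P) = mat 1" and M2: "(Wt ** P) ** M = mat 1"
    unfolding invertible_def by blast
  have "(M ** Wht) ** Ph = mat 1" using M1 F3 by (simp add: matrix_mul_assoc)
  hence invPh: "invertible Ph" using invertible_left_inverse by blast
  have "Wht ** (Ph ** M) = mat 1" using M2 F3 by (simp add: matrix_mul_assoc)
  hence invWht: "invertible Wht" using invertible_right_inverse by blast
  obtain Wi where Wi1: "Wi ** Wt = mat 1" using invWt invertible_left_inverse by blast
  hence invWi: "invertible Wi" using invertible_right_inverse by blast
  define L where "L = Wi ** Wht"
  have invL: "invertible L" unfolding L_def by (rule invertible_mult[OF invWi invWht])
  have C1: "\<forall>x\<in>X. \<Psi> x = L *v \<Psi>h x"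
  proof
    fix x assume x: "x \<in> X"
    have "\<Psi> x = (Wi ** Wt) *v \<Psi> x" using Wi1 by simp
    also have "\<dots> = Wi *v (Wt *v \<Psi> x)" by (simp add: matrix_vector_mul_assoc)
    also have "\<dots> = Wi *v (Wht *v \<Psi>h x)" using F2[OF x] by simp
    also have "\<dots> = L *v \<Psi>h x" unfolding L_def by (simp add: matrix_vector_mul_assoc)
    finally show "\<Psi> x = L *v \<Psi>h x" .
  qed
  have C2: "\<forall>e\<in>E. w e v* L = wh e"
  proof
    fix e assume e: "e \<in> E"
    define v where "v = w e v* L - wh e"
    have vl: "\<And>l. v \<bullet> \<Psi>h (xs l) = 0"
    proof -
      fix l
      have "v \<bullet> \<Psi>h (xs l) = (w e v* L) \<bullet> \<Psi>h (xs l) - wh e \<bullet> \<Psi>h (xs l)"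
        unfolding v_def by (simp add: inner_diff_left)
      also have "\<dots> = w e \<bullet> \<Psi> (xs l) - wh e \<bullet> \<Psi>h (xs l)"
        using C1 xs by (simp add: dot_lmul_matrix)
      also have "\<dots> = 0" using eq e xs by simp
      finally show "v \<bullet> \<Psi>h (xs l) = 0" .
    qed
    have v0: "v v* Ph = 0"
      using vl unfolding Ph_def by (simp add: vec_eq_iff vector_matrix_mult_def inner_vec_def mult.commute)
    obtain Phi where "Ph ** Phi = mat 1" using invPh invertible_right_inverse by blast
    hence "v = (v v* Ph) v* Phi" by (simp add: vector_matrix_mul_assoc)
    hence "v = 0" using v0 by simp
    thus "w e v* L = wh e" unfolding v_def by simp
  qed
  show ?thesis using invL C1 C2 by blast
qed

theorem proposition4p4:
  fixes E :: "'e set" and A :: "('e \<times> 'e) set" and r :: 'e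
    and X :: "(real^'d) set"
    and w0 :: "real^'k" and \<delta> :: "'e \<times> 'e \<Rightarrow> real^'k" and \<Psi> :: "real^'d \<Rightarrow> real^'k"
    and w0h :: "real^'k" and \<delta>h :: "'e \<times> 'e \<Rightarrow> real^'k" and \<Psi>h :: "real^'d \<Rightarrow> real^'k"
    and m :: "'e \<Rightarrow> real^'d \<Rightarrow> real"
  assumes tree: "directed_tree E A r"
    and model: "\<forall>e\<in>E. \<forall>x\<in>X. m e x = tree_weight A r w0 \<delta> e \<bullet> \<Psi> x"
    and env_div: "\<exists>es :: 'k \<Rightarrow> 'e. (\<forall>i. es i \<in> E) \<and>
                    invertible (\<chi> j i. tree_weight A r w0 \<delta> (es i) $ j)"
    and feat_div: "\<exists>xs :: 'k \<Rightarrow> real^'d. (\<forall>i. xs i \<in> X) \<and>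
                    invertible (\<chi> j i. \<Psi> (xs i) $ j)"
    and fit: "\<forall>e\<in>E. \<forall>x\<in>X. m e x = tree_weight A r w0h \<delta>h e \<bullet> \<Psi>h x"
  shows "\<exists>L :: real^'k^'k. invertible L \<and>
           (\<forall>x\<in>X. \<Psi> x = L *v \<Psi>h x) \<and>
           (\<forall>e\<in>E. tree_weight A r w0 \<delta> e v* L = tree_weight A r w0h \<delta>h e) \<and>
           (\<forall>a\<in>A. \<delta> a v* L = \<delta>h a)"
proof -
  obtain es :: "'k \<Rightarrow> 'e" where es: "\<forall>i. es i \<in> E"
    and iW: "invertible (\<chi> j i. tree_weight A r w0 \<delta> (es i) $ j)" using env_div by blast
  obtain xs :: "'k \<Rightarrow> real^'d" where xs: "\<forall>i. xs i \<in> X"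
    and iP: "invertible (\<chi> j i. \<Psi> (xs i) $ j)" using feat_div by blast
  have eq: "\<forall>e\<in>E. \<forall>x\<in>X. tree_weight A r w0 \<delta> e \<bullet> \<Psi> x = tree_weight A r w0h \<delta>h e \<bullet> \<Psi>h x"
    using model fit by simp
  obtain L :: "real^'k^'k" where L: "invertible L" "\<forall>x\<in>X. \<Psi> x = L *v \<Psi>h x"
    "\<forall>e\<in>E. tree_weight A r w0 \<delta> e v* L = tree_weight A r w0h \<delta>h e"
    using lin_ident[OF eq es iW xs iP] by blast
  have "\<forall>a\<in>A. \<delta> a v* L = \<delta>h a"
  proof
    fix a assume a: "a \<in> A"
    obtain u v where uv: "a = (u, v)" by (cases a)
    have uE: "u \<in> E" and vE: "v \<in> E" using tree a uv unfolding directed_tree_def by auto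
    have "\<delta> a v* L = (tree_weight A r w0 \<delta> v - tree_weight A r w0 \<delta> u) v* L"
      using tree_weight_step[OF tree a[unfolded uv], where dl=\<delta> and wz=w0] uv by simp
    also have "\<dots> = tree_weight A r w0h \<delta>h v - tree_weight A r w0h \<delta>h u"
      using L(3) uE vE by (simp add: vector_matrix_mult_diff_distrib)
    also have "\<dots> = \<delta>h a"
      using tree_weight_step[OF tree a[unfolded uv], where dl=\<delta>h and wz=w0h] uv by simp
    finally show "\<delta> a v* L = \<delta>h a" .
  qed
  thus ?thesis using L by blast
qed

end
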